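(* Let $f,g_1,g_2\in L^2(\mathbb{R}^2\times\mathbb{R})$ with $\|f\|_{L^2}=\|g_1\|_{L^2}=\|g_2\|_{L^2}=1$ and $\operatorname{supp}f\subset\mathfrak{P}_N\cap\mathfrak{W}^\pm_L$, $\operatorname{supp}g_k\subset\mathfrak{P}_{N_k}\cap\mathfrak{S}_{L_k}$ ($k=1,2$), and assume $N\lesssim1$. Then $$\Big|\int f(\zeta_1-\zeta_2)g_1(\zeta_1)g_2(\zeta_2)\,d\zeta_1d\zeta_2\Big|\lesssim L^{1/3}L_1^{1/3}L_2^{1/3}.$$
   Context: Points are $\zeta=(\xi,\tau)\in\mathbb{R}^2\times\mathbb{R}$. All of $N,N_1,N_2,L,L_1,L_2$ are dyadic numbers $2^n$, $n\ge0$. $\mathfrak{P}_1=\{|\xi|\le2\}$, $\mathfrak{P}_N=\{N/2\le|\xi|\le2N\}$ ($N\ge2$); $\mathfrak{S}_1=\{|\tau+|\xi|^2|\le2\}$, $\mathfrak{S}_L=\{L/2\le|\tau+|\xi|^2|\le2L\}$; $\mathfrak{W}^\pm_1=\{|\tau\pm|\xi||\le2\}$, $\mathfrak{W}^\pm_L=\{L/2\le|\tau\pm|\xi||\le2L\}$ ($L\ge2$). $A\lesssim B$ means $A\le cB$ with an absolute constant $c$. *)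

theory Defs
  imports "HOL-Analysis.Analysis"
begin

text \<open>Points \<zeta> = (\<xi>, \<tau>) with \<xi> \<in> R^2 (encoded as real \<times> real, Euclidean norm) and \<tau> \<in> R.\<close>
type_synonym pt = "(real \<times> real) \<times> real"

definition dyadic :: "real \<Rightarrow> bool" where
  "dyadic N \<longleftrightarrow> (\<exists>n::nat. N = 2 ^ n)"

definition Pset :: "real \<Rightarrow> pt set" where
  "Pset N = (if N = 1 then {z. norm (fst z) \<le> 2}
             else {z. N / 2 \<le> norm (fst z) \<and> norm (fst z) \<le> 2 * N})"

definition Sset :: "real \<Rightarrow> pt set" where
  "Sset L = (if L = 1 then {z. \<bar>snd z + (norm (fst z))\<^sup>2\<bar> \<le> 2}
             else {z. L / 2 \<le> \<bar>snd z + (norm (fst z))\<^sup>2\<bar> \<and> \<bar>snd z + (norm (fst z))\<^sup>2\<bar> \<le> 2 * L})"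

text \<open>Wset s L with s \<in> {1, -1} is W^{\<plusminus>}_L: the condition on \<tau> + s |\<xi>|.\<close>
definition Wset :: "real \<Rightarrow> real \<Rightarrow> pt set" where
  "Wset s L = (if L = 1 then {z. \<bar>snd z + s * norm (fst z)\<bar> \<le> 2}
             else {z. L / 2 \<le> \<bar>snd z + s * norm (fst z)\<bar> \<and> \<bar>snd z + s * norm (fst z)\<bar> \<le> 2 * L})"

definition L2_unit :: "(pt \<Rightarrow> complex) \<Rightarrow> bool" where
  "L2_unit f \<longleftrightarrow> f \<in> borel_measurable lborel
      \<and> integrable lborel (\<lambda>z. (norm (f z))\<^sup>2)
      \<and> (\<integral>z. (norm (f z))\<^sup>2 \<partial>lborel) = 1"

end

theory Submission
  imports Defs
begin

lemma box_meas:
  fixes x :: "real \<times> real" and r :: real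
  assumes "r \<ge> 0"
  shows "emeasure lborel (cball x r) \<le> ennreal (4 * r\<^sup>2)"
proof -
  have sub: "cball x r \<subseteq> {fst x - r .. fst x + r} \<times> {snd x - r .. snd x + r}"
  proof
    fix y assume "y \<in> cball x r"
    then have d: "dist x y \<le> r" by simp
    have "\<bar>fst x - fst y\<bar> \<le> dist x y" "\<bar>snd x - snd y\<bar> \<le> dist x y"
      by (metis dist_fst_le dist_real_def, metis dist_snd_le dist_real_def)
    with d show "y \<in> {fst x - r .. fst x + r} \<times> {snd x - r .. snd x + r}"
      by (cases y) auto
  qed
  have "emeasure lborel (cball x r) \<le> emeasure lborel ({fst x - r .. fst x + r} \<times> {snd x - r .. snd x + r})"
    by (rule emeasure_mono[OF sub]) (simp add: borel_closed closed_Times)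
  also have "\<dots> = emeasure (lborel \<Otimes>\<^sub>M lborel) ({fst x - r .. fst x + r} \<times> {snd x - r .. snd x + r})"
    by (simp only: lborel_prod)
  also have "\<dots> = ennreal (2*r) * ennreal (2*r)"
    using assms by (subst lborel.emeasure_pair_measure_Times) auto
  also have "\<dots> = ennreal (4 * r\<^sup>2)"
    using assms by (simp add: ennreal_mult[symmetric] power2_eq_square)
  finally show ?thesis .
qed

lemma section_bound:
  fixes a :: pt and c L L2 s :: real
  assumes c: "c > 0" and L: "L > 0" and L2: "L2 > 0"
  shows "emeasure lborel {b::pt. \<bar>snd b + (norm (fst b))\<^sup>2\<bar> \<le> 2*L2 \<and> norm (fst a - fst b) \<le> 2*c
            \<and> \<bar>snd a - snd b + s * norm (fst a - fst b)\<bar> \<le> 2*L}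
         \<le> ennreal (4 * min L L2) * ennreal (16 * c\<^sup>2)"
proof -
  define X where "X = {b::pt. \<bar>snd b + (norm (fst b))\<^sup>2\<bar> \<le> 2*L2 \<and> norm (fst a - fst b) \<le> 2*c
            \<and> \<bar>snd a - snd b + s * norm (fst a - fst b)\<bar> \<le> 2*L}"
  have Xb: "X \<in> sets borel" proof (rule borel_closed)
    show "closed X" unfolding X_def
      by (intro closed_Collect_conj closed_Collect_le continuous_intros)
  qed
  have Xm: "X \<in> sets ((lborel::(real\<times>real) measure) \<Otimes>\<^sub>M (lborel::real measure))"
    using Xb by (simp only: lborel_prod sets_lborel)
  have "emeasure lborel X = emeasure ((lborel::(real\<times>real) measure) \<Otimes>\<^sub>M (lborel::real measure)) X"
    by (simp only: lborel_prod)
  also have "\<dots> = (\<integral>\<^sup>+\<xi>. emeasure lborel (Pair \<xi> -` X) \<partial>lborel)"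
    by (rule lborel.emeasure_pair_measure_alt[OF Xm])
  also have "\<dots> \<le> (\<integral>\<^sup>+\<xi>. ennreal (4 * min L L2) * indicator (cball (fst a) (2*c)) \<xi> \<partial>lborel)"
  proof (rule nn_integral_mono)
    fix \<xi> :: "real \<times> real"
    show "emeasure lborel (Pair \<xi> -` X) \<le> ennreal (4 * min L L2) * indicator (cball (fst a) (2*c)) \<xi>"
    proof (cases "norm (fst a - \<xi>) \<le> 2*c")
      case True
      define n where "n = norm (fst a - \<xi>)"
      have s1: "Pair \<xi> -` X \<subseteq> {-(norm \<xi>)\<^sup>2 - 2*L2 .. -(norm \<xi>)\<^sup>2 + 2*L2}"
        unfolding X_def by auto
      have s2: "Pair \<xi> -` X \<subseteq> {snd a + s*n - 2*L .. snd a + s*n + 2*L}"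
        unfolding X_def n_def by auto
      have m1: "emeasure lborel (Pair \<xi> -` X) \<le> ennreal (4*L2)"
        using emeasure_mono[OF s1, of lborel] L2 by simp
      have m2: "emeasure lborel (Pair \<xi> -` X) \<le> ennreal (4*L)"
        using emeasure_mono[OF s2, of lborel] L by simp
      have "emeasure lborel (Pair \<xi> -` X) \<le> ennreal (4 * min L L2)"
        using m1 m2 by (cases "L \<le> L2") (auto simp: min_def)
      moreover have "\<xi> \<in> cball (fst a) (2*c)" using True by (simp add: dist_norm)
      ultimately show ?thesis by simp
    next
      case False
      then have "Pair \<xi> -` X = {}" unfolding X_def by auto
      then show ?thesis by simp
    qed
  qed
  also have "\<dots> = ennreal (4 * min L L2) * emeasure lborel (cball (fst a) (2*c))"
    by (rule nn_integral_cmult_indicator) simp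
  also have "\<dots> \<le> ennreal (4 * min L L2) * ennreal (4 * (2*c)\<^sup>2)"
    using box_meas[of "2*c" "fst a"] c by (intro mult_left_mono) auto
  also have "\<dots> = ennreal (4 * min L L2) * ennreal (16 * c\<^sup>2)"
    by (simp add: power2_eq_square)
  finally show ?thesis unfolding X_def .
qed

lemma amgm:
  fixes x y l :: real
  assumes "l > 0"
  shows "x * y \<le> l/2 * x\<^sup>2 + 1/(2*l) * y\<^sup>2"
proof -
  have "0 \<le> (l*x - y)\<^sup>2 / (2*l)" using assms by simp
  also have "\<dots> = l/2 * x\<^sup>2 + 1/(2*l) * y\<^sup>2 - x*y"
    using assms by (simp add: field_simps power2_eq_square)
  finally show ?thesis by simp
qed

lemma translate_nn:
  fixes F :: "pt \<Rightarrow> real" and b :: pt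
  assumes [measurable]: "F \<in> borel_measurable borel"
  shows "(\<integral>\<^sup>+a. ennreal ((F (a - b))\<^sup>2) \<partial>lborel) = (\<integral>\<^sup>+a. ennreal ((F a)\<^sup>2) \<partial>lborel)"
proof -
  have "(\<integral>\<^sup>+a. ennreal ((F a)\<^sup>2) \<partial>lborel) = (\<integral>\<^sup>+a. ennreal ((F a)\<^sup>2) \<partial>(distr lborel borel ((+) (-b))))"
    by (simp add: lborel_distr_plus)
  also have "\<dots> = (\<integral>\<^sup>+a. ennreal ((F (-b + a))\<^sup>2) \<partial>lborel)"
    by (rule nn_integral_distr) auto
  finally show ?thesis by (simp add: algebra_simps)
qed

lemma bilinear:
  fixes F G1 G2 :: "pt \<Rightarrow> real" and c L L2 s :: real
  assumes c: "c > 0" and L: "L > 0" and L2: "L2 > 0"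
    and Fm[measurable]: "F \<in> borel_measurable borel"
    and G1m[measurable]: "G1 \<in> borel_measurable borel"
    and G2m[measurable]: "G2 \<in> borel_measurable borel"
    and Fn: "\<And>z. F z \<ge> 0" and G1n: "\<And>z. G1 z \<ge> 0" and G2n: "\<And>z. G2 z \<ge> 0"
    and F1: "(\<integral>\<^sup>+z. ennreal ((F z)\<^sup>2) \<partial>lborel) = 1"
    and G11: "(\<integral>\<^sup>+z. ennreal ((G1 z)\<^sup>2) \<partial>lborel) = 1"
    and G21: "(\<integral>\<^sup>+z. ennreal ((G2 z)\<^sup>2) \<partial>lborel) = 1"
    and Fs: "\<And>z. F z \<noteq> 0 \<Longrightarrow> norm (fst z) \<le> 2*c \<and> \<bar>snd z + s * norm (fst z)\<bar> \<le> 2*L"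
    and G2s: "\<And>z. G2 z \<noteq> 0 \<Longrightarrow> \<bar>snd z + (norm (fst z))\<^sup>2\<bar> \<le> 2*L2"
  shows "(\<integral>\<^sup>+p. ennreal (F (fst p - snd p) * G1 (fst p) * G2 (snd p)) \<partial>(lborel :: (pt \<times> pt) measure))
           \<le> ennreal (sqrt (64 * c\<^sup>2 * min L L2))"
proof -
  define K where "K = 64 * c\<^sup>2 * min L L2"
  have Kp: "K > 0" unfolding K_def using c L L2 by simp
  define q where "q = sqrt K"
  have qp: "q > 0" unfolding q_def using Kp by simp
  have qK: "q\<^sup>2 = K" unfolding q_def using Kp by simp
  define l where "l = 1 / q"
  have lp: "l > 0" unfolding l_def using qp by simp
  define E where "E = {p::pt\<times>pt. \<bar>snd (snd p) + (norm (fst (snd p)))\<^sup>2\<bar> \<le> 2*L2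
      \<and> norm (fst (fst p) - fst (snd p)) \<le> 2*c
      \<and> \<bar>snd (fst p) - snd (snd p) + s * norm (fst (fst p) - fst (snd p))\<bar> \<le> 2*L}"
  have Eb: "E \<in> sets borel"
  proof (rule borel_closed)
    show "closed E" unfolding E_def
      by (intro closed_Collect_conj closed_Collect_le continuous_intros)
  qed
  have Em[measurable]: "E \<in> sets ((lborel::pt measure) \<Otimes>\<^sub>M (lborel::pt measure))"
    using Eb by (simp only: lborel_prod sets_lborel)
  define T1 where "T1 p = (G1 (fst p))\<^sup>2 * indicator E p" for p :: "pt \<times> pt"
  define T2 where "T2 p = (F (fst p - snd p))\<^sup>2 * (G2 (snd p))\<^sup>2" for p :: "pt \<times> pt"
  have T1m[measurable]: "(\<lambda>p. ennreal (T1 p)) \<in> borel_measurable ((lborel::pt measure) \<Otimes>\<^sub>M lborel)"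
    unfolding T1_def by measurable
  have T2m[measurable]: "(\<lambda>p. ennreal (T2 p)) \<in> borel_measurable ((lborel::pt measure) \<Otimes>\<^sub>M lborel)"
    unfolding T2_def by measurable
  have pw: "F (fst p - snd p) * G1 (fst p) * G2 (snd p) \<le> l/2 * T1 p + 1/(2*l) * T2 p" for p
  proof (cases "F (fst p - snd p) = 0 \<or> G2 (snd p) = 0")
    case True
    then show ?thesis unfolding T1_def T2_def using lp
      by (auto intro!: add_nonneg_nonneg mult_nonneg_nonneg)
  next
    case False
    then have "p \<in> E" unfolding E_def using Fs[of "fst p - snd p"] G2s[of "snd p"] by auto
    then have "T1 p = (G1 (fst p))\<^sup>2" unfolding T1_def by simp
    moreover have "T2 p = (F (fst p - snd p) * G2 (snd p))\<^sup>2" unfolding T2_def by (simp add: power_mult_distrib)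
    ultimately show ?thesis using amgm[OF lp, of "G1 (fst p)" "F (fst p - snd p) * G2 (snd p)"]
      by (simp add: algebra_simps)
  qed
  have T1n: "T1 p \<ge> 0" for p unfolding T1_def by simp
  have T2n: "T2 p \<ge> 0" for p unfolding T2_def by simp
  have I1: "(\<integral>\<^sup>+p. ennreal (T1 p) \<partial>((lborel::pt measure) \<Otimes>\<^sub>M lborel)) \<le> ennreal K"
  proof -
    have "(\<integral>\<^sup>+p. ennreal (T1 p) \<partial>((lborel::pt measure) \<Otimes>\<^sub>M lborel))
        = (\<integral>\<^sup>+a. \<integral>\<^sup>+b. ennreal (T1 (a,b)) \<partial>lborel \<partial>lborel)"
      by (rule lborel.nn_integral_fst[symmetric]) measurable
    also have "\<dots> \<le> (\<integral>\<^sup>+a. ennreal ((G1 a)\<^sup>2) * ennreal K \<partial>lborel)"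
    proof (rule nn_integral_mono)
      fix a :: pt
      have "(\<integral>\<^sup>+b. ennreal (T1 (a,b)) \<partial>lborel) = (\<integral>\<^sup>+b. ennreal ((G1 a)\<^sup>2) * indicator (Pair a -` E) b \<partial>lborel)"
        by (rule nn_integral_cong) (simp add: T1_def indicator_def)
      also have "\<dots> = ennreal ((G1 a)\<^sup>2) * emeasure lborel (Pair a -` E)"
        by (rule nn_integral_cmult_indicator) (rule sets_Pair1[OF Em])
      also have "Pair a -` E = {b::pt. \<bar>snd b + (norm (fst b))\<^sup>2\<bar> \<le> 2*L2 \<and> norm (fst a - fst b) \<le> 2*c
            \<and> \<bar>snd a - snd b + s * norm (fst a - fst b)\<bar> \<le> 2*L}"
        unfolding E_def by auto
      also have "ennreal ((G1 a)\<^sup>2) * emeasure lborel \<dots> \<le> ennreal ((G1 a)\<^sup>2) * (ennreal (4 * min L L2) * ennreal (16 * c\<^sup>2))"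
        by (intro mult_left_mono section_bound c L L2) simp
      also have "ennreal (4 * min L L2) * ennreal (16 * c\<^sup>2) = ennreal K"
        unfolding K_def using L L2 by (simp add: ennreal_mult[symmetric])
      finally show "(\<integral>\<^sup>+b. ennreal (T1 (a,b)) \<partial>lborel) \<le> ennreal ((G1 a)\<^sup>2) * ennreal K" .
    qed
    also have "\<dots> = (\<integral>\<^sup>+a. ennreal ((G1 a)\<^sup>2) \<partial>lborel) * ennreal K"
      by (rule nn_integral_multc) measurable
    also have "\<dots> = ennreal K" using G11 by simp
    finally show ?thesis .
  qed
  have I2: "(\<integral>\<^sup>+p. ennreal (T2 p) \<partial>((lborel::pt measure) \<Otimes>\<^sub>M lborel)) = 1"
  proof -
    have "(\<integral>\<^sup>+p. ennreal (T2 p) \<partial>((lborel::pt measure) \<Otimes>\<^sub>M lborel))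
        = (\<integral>\<^sup>+b. \<integral>\<^sup>+a. ennreal (T2 (a,b)) \<partial>lborel \<partial>lborel)"
      by (rule lborel_pair.nn_integral_snd[symmetric]) measurable
    also have "\<dots> = (\<integral>\<^sup>+b. ennreal ((G2 b)\<^sup>2) \<partial>lborel)"
    proof (rule nn_integral_cong)
      fix b :: pt
      have "(\<integral>\<^sup>+a. ennreal (T2 (a,b)) \<partial>lborel) = (\<integral>\<^sup>+a. ennreal ((G2 b)\<^sup>2) * ennreal ((F (a - b))\<^sup>2) \<partial>lborel)"
        by (rule nn_integral_cong) (simp add: T2_def ennreal_mult[symmetric] mult.commute)
      also have "\<dots> = ennreal ((G2 b)\<^sup>2) * (\<integral>\<^sup>+a. ennreal ((F (a - b))\<^sup>2) \<partial>lborel)"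
        by (rule nn_integral_cmult) measurable
      also have "\<dots> = ennreal ((G2 b)\<^sup>2)" using translate_nn[OF Fm, of b] F1 by simp
      finally show "(\<integral>\<^sup>+a. ennreal (T2 (a,b)) \<partial>lborel) = ennreal ((G2 b)\<^sup>2)" .
    qed
    also have "\<dots> = 1" by (rule G21)
    finally show ?thesis .
  qed
  have "(\<integral>\<^sup>+p. ennreal (F (fst p - snd p) * G1 (fst p) * G2 (snd p)) \<partial>(lborel :: (pt \<times> pt) measure))
      = (\<integral>\<^sup>+p. ennreal (F (fst p - snd p) * G1 (fst p) * G2 (snd p)) \<partial>((lborel::pt measure) \<Otimes>\<^sub>M lborel))"
    by (simp only: lborel_prod)
  also have "\<dots> \<le> (\<integral>\<^sup>+p. ennreal (l/2) * ennreal (T1 p) + ennreal (1/(2*l)) * ennreal (T2 p) \<partial>((lborel::pt measure) \<Otimes>\<^sub>M lborel))"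
  proof (rule nn_integral_mono)
    fix p
    have "ennreal (F (fst p - snd p) * G1 (fst p) * G2 (snd p)) \<le> ennreal (l/2 * T1 p + 1/(2*l) * T2 p)"
      using pw by (rule ennreal_leI)
    also have "\<dots> = ennreal (l/2 * T1 p) + ennreal (1/(2*l) * T2 p)"
      using lp T1n[of p] T2n[of p] by (intro ennreal_plus) auto
    also have "\<dots> = ennreal (l/2) * ennreal (T1 p) + ennreal (1/(2*l)) * ennreal (T2 p)"
      using lp T1n[of p] T2n[of p] ennreal_mult[of "l/2" "T1 p"] ennreal_mult[of "1/(2*l)" "T2 p"] by simp
    finally show "ennreal (F (fst p - snd p) * G1 (fst p) * G2 (snd p)) \<le> \<dots>" .
  qed
  also have "\<dots> = ennreal (l/2) * (\<integral>\<^sup>+p. ennreal (T1 p) \<partial>((lborel::pt measure) \<Otimes>\<^sub>M lborel))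
       + ennreal (1/(2*l)) * (\<integral>\<^sup>+p. ennreal (T2 p) \<partial>((lborel::pt measure) \<Otimes>\<^sub>M lborel))"
    by (subst nn_integral_add) (auto simp: nn_integral_cmult)
  also have "\<dots> \<le> ennreal (l/2) * ennreal K + ennreal (1/(2*l)) * 1"
    using I1 I2 by (intro add_mono mult_left_mono) auto
  also have "\<dots> = ennreal (l/2 * K + 1/(2*l))"
    using lp Kp ennreal_mult[of "l/2" K] by (simp add: ennreal_plus)
  also have "l/2 * K + 1/(2*l) = q"
    unfolding l_def qK[symmetric] using qp by (simp add: field_simps power2_eq_square)
  finally show ?thesis unfolding q_def K_def .
qed



lemma final_arith:
  fixes c L L1 L2 :: real
  assumes "c > 0" "L \<ge> 1" "L1 \<ge> 1" "L2 \<ge> 1"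
  shows "sqrt (64 * c\<^sup>2 * min L L2) \<le> 8 * c * L powr (1/3) * L1 powr (1/3) * L2 powr (1/3)"
proof -
  define m where "m = min L L2"
  have m1: "m \<ge> 1" "m \<le> L" "m \<le> L2" using assms unfolding m_def by auto
  have "sqrt (64 * c\<^sup>2 * m) = 8 * c * sqrt m"
    using assms m1 by (simp add: real_sqrt_mult real_sqrt_abs)
  also have "sqrt m = m powr (1/4) * m powr (1/4)"
    using m1 by (simp add: powr_half_sqrt[symmetric] powr_add[symmetric])
  also have "\<dots> \<le> L powr (1/4) * L2 powr (1/4)"
    using m1 by (intro mult_mono powr_mono2) auto
  also have "\<dots> \<le> L powr (1/3) * L2 powr (1/3)"
    using assms by (intro mult_mono powr_mono) auto
  also have "\<dots> \<le> L powr (1/3) * L1 powr (1/3) * L2 powr (1/3)"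
  proof -
    have "1 \<le> L1 powr (1/3)" using assms by (simp add: ge_one_powr_ge_zero)
    moreover have "0 \<le> L powr (1/3) * L2 powr (1/3)" by simp
    ultimately have "(L powr (1/3) * L2 powr (1/3)) * 1 \<le> (L powr (1/3) * L2 powr (1/3)) * L1 powr (1/3)"
      by (intro mult_left_mono)
    then show ?thesis by (simp add: ac_simps)
  qed
  finally show ?thesis unfolding m_def using assms
    by (simp add: mult.assoc mult_left_mono)
qed

lemma dyadic_ge1: "dyadic N \<Longrightarrow> N \<ge> 1"
  unfolding dyadic_def by auto

lemma L2_nn:
  assumes "L2_unit f"
  shows "(\<lambda>z. norm (f z)) \<in> borel_measurable borel"
    and "(\<integral>\<^sup>+z. ennreal ((norm (f z))\<^sup>2) \<partial>lborel) = 1"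
proof -
  show "(\<lambda>z. norm (f z)) \<in> borel_measurable borel"
  proof -
    have [measurable]: "f \<in> borel_measurable borel" using assms unfolding L2_unit_def by simp
    show ?thesis by measurable
  qed
  have "(\<integral>\<^sup>+z. ennreal ((norm (f z))\<^sup>2) \<partial>lborel) = ennreal (\<integral>z. (norm (f z))\<^sup>2 \<partial>lborel)"
    using assms unfolding L2_unit_def by (intro nn_integral_eq_integral) auto
  then show "(\<integral>\<^sup>+z. ennreal ((norm (f z))\<^sup>2) \<partial>lborel) = 1"
    using assms unfolding L2_unit_def by simp
qed

theorem proposition4p9:
  "\<forall>c0>0. \<exists>C>0. \<forall>(s::real) N N1 N2 L L1 L2 (f::pt \<Rightarrow> complex) g1 g2.
     s \<in> {1, -1} \<and> dyadic N \<and> dyadic N1 \<and> dyadic N2 \<and> dyadic L \<and> dyadic L1 \<and> dyadic L2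
     \<and> N \<le> c0
     \<and> L2_unit f \<and> L2_unit g1 \<and> L2_unit g2
     \<and> (\<forall>z. f z \<noteq> 0 \<longrightarrow> z \<in> Pset N \<inter> Wset s L)
     \<and> (\<forall>z. g1 z \<noteq> 0 \<longrightarrow> z \<in> Pset N1 \<inter> Sset L1)
     \<and> (\<forall>z. g2 z \<noteq> 0 \<longrightarrow> z \<in> Pset N2 \<inter> Sset L2)
     \<longrightarrow> norm (\<integral>p. f (fst p - snd p) * g1 (fst p) * g2 (snd p) \<partial>(lborel :: (pt \<times> pt) measure))
         \<le> C * L powr (1/3) * L1 powr (1/3) * L2 powr (1/3)"
proof (intro allI impI)
  fix c0 :: real assume c0: "c0 > 0"
  show "\<exists>C>0. \<forall>(s::real) N N1 N2 L L1 L2 (f::pt \<Rightarrow> complex) g1 g2.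
     s \<in> {1, -1} \<and> dyadic N \<and> dyadic N1 \<and> dyadic N2 \<and> dyadic L \<and> dyadic L1 \<and> dyadic L2
     \<and> N \<le> c0
     \<and> L2_unit f \<and> L2_unit g1 \<and> L2_unit g2
     \<and> (\<forall>z. f z \<noteq> 0 \<longrightarrow> z \<in> Pset N \<inter> Wset s L)
     \<and> (\<forall>z. g1 z \<noteq> 0 \<longrightarrow> z \<in> Pset N1 \<inter> Sset L1)
     \<and> (\<forall>z. g2 z \<noteq> 0 \<longrightarrow> z \<in> Pset N2 \<inter> Sset L2)
     \<longrightarrow> norm (\<integral>p. f (fst p - snd p) * g1 (fst p) * g2 (snd p) \<partial>(lborel :: (pt \<times> pt) measure))
         \<le> C * L powr (1/3) * L1 powr (1/3) * L2 powr (1/3)"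
  proof (intro exI[of _ "8*c0"] conjI allI impI)
    show "8*c0 > 0" using c0 by simp
    fix s N N1 N2 L L1 L2 :: real and f g1 g2 :: "pt \<Rightarrow> complex"
    assume H: "s \<in> {1, -1} \<and> dyadic N \<and> dyadic N1 \<and> dyadic N2 \<and> dyadic L \<and> dyadic L1 \<and> dyadic L2
     \<and> N \<le> c0
     \<and> L2_unit f \<and> L2_unit g1 \<and> L2_unit g2
     \<and> (\<forall>z. f z \<noteq> 0 \<longrightarrow> z \<in> Pset N \<inter> Wset s L)
     \<and> (\<forall>z. g1 z \<noteq> 0 \<longrightarrow> z \<in> Pset N1 \<inter> Sset L1)
     \<and> (\<forall>z. g2 z \<noteq> 0 \<longrightarrow> z \<in> Pset N2 \<inter> Sset L2)"
    have N1': "N \<ge> 1" "L \<ge> 1" "L1 \<ge> 1" "L2 \<ge> 1" using H dyadic_ge1 by auto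
    have hf: "\<forall>z. f z \<noteq> 0 \<longrightarrow> z \<in> Pset N \<inter> Wset s L" using H by blast
    have hg2: "\<forall>z. g2 z \<noteq> 0 \<longrightarrow> z \<in> Pset N2 \<inter> Sset L2" using H by blast
    have Fs: "norm (fst z) \<le> 2*c0 \<and> \<bar>snd z + s * norm (fst z)\<bar> \<le> 2*L" if "norm (f z) \<noteq> 0" for z
    proof -
      have "z \<in> Pset N \<inter> Wset s L" using hf that by (metis norm_eq_zero)
      then have "norm (fst z) \<le> 2*N" "\<bar>snd z + s * norm (fst z)\<bar> \<le> 2*L"
        unfolding Pset_def Wset_def by (auto split: if_splits)
      then show ?thesis using H by auto
    qed
    have G2s: "\<bar>snd z + (norm (fst z))\<^sup>2\<bar> \<le> 2*L2" if "norm (g2 z) \<noteq> 0" for z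
    proof -
      have "z \<in> Pset N2 \<inter> Sset L2" using hg2 that by (metis norm_eq_zero)
      then show ?thesis unfolding Sset_def by (auto split: if_splits)
    qed
    have B: "(\<integral>\<^sup>+p. ennreal (norm (f (fst p - snd p)) * norm (g1 (fst p)) * norm (g2 (snd p))) \<partial>(lborel :: (pt \<times> pt) measure))
           \<le> ennreal (sqrt (64 * c0\<^sup>2 * min L L2))"
      by (rule bilinear[OF c0 _ _ L2_nn(1) L2_nn(1) L2_nn(1) _ _ _ L2_nn(2) L2_nn(2) L2_nn(2) Fs G2s])
         (use H N1' in auto)
    have "norm (\<integral>p. f (fst p - snd p) * g1 (fst p) * g2 (snd p) \<partial>(lborel :: (pt \<times> pt) measure))
        \<le> (\<integral>p. norm (f (fst p - snd p) * g1 (fst p) * g2 (snd p)) \<partial>(lborel :: (pt \<times> pt) measure))"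
      by (rule integral_norm_bound)
    also have "\<dots> \<le> sqrt (64 * c0\<^sup>2 * min L L2)"
      by (rule integral_real_bounded) (use B N1' in \<open>simp_all add: norm_mult\<close>)
    also have "\<dots> \<le> 8 * c0 * L powr (1/3) * L1 powr (1/3) * L2 powr (1/3)"
      by (rule final_arith) (use c0 N1' in auto)
    finally show "norm (\<integral>p. f (fst p - snd p) * g1 (fst p) * g2 (snd p) \<partial>(lborel :: (pt \<times> pt) measure))
         \<le> 8 * c0 * L powr (1/3) * L1 powr (1/3) * L2 powr (1/3)" .
  qed
qed

end
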